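(* Let $p$ be an odd prime and $\chi\ne1$ a Dirichlet character with odd conductor $f_\chi$ such that $p^2\nmid f_\chi$. Write $$\ell_{p,E}(s,\chi)=a_0-a_1(s-1)+a_2(s-1)^2-\cdots .$$ Then $|a_0|_p\le1$ and $p\mid a_n$ (i.e. $|a_n|_p\le|p|_p$) for all $n\geq1$.
   Context: Set $\chi(a)=0$ if $\gcd(a,f_\chi)>1$. Let $\omega$ be the Teichmüller character mod $p$ and $\langle a\rangle=\omega^{-1}(a)a$ for $a\in\mathbb Z_p^\times$. The $p$-adic Euler $\ell$-function is the $p$-adic analytic function $\ell_{p,E}(s,\chi)=\lim_{N\to\infty}\sum_{a=1,\,p\nmid a}^{f_\chi p^N}(-1)^a\chi(a)\langle a\rangle^{1-s}$, whose expansion about $s=1$ is as displayed, with coefficients $a_n\in\mathbb Q_p(\chi)$. *)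

theory Defs
  imports "HOL-Number_Theory.Number_Theory"
begin

definition padic_abs :: "nat \<Rightarrow> nat \<Rightarrow> real" where
  "padic_abs p n = (if n = 0 then 0 else inverse (real p ^ multiplicity p n))"

definition nv_lim :: "('a::field \<Rightarrow> real) \<Rightarrow> (nat \<Rightarrow> 'a) \<Rightarrow> 'a \<Rightarrow> bool" where
  "nv_lim nv X L \<longleftrightarrow> (\<forall>e>0. \<exists>N. \<forall>n\<ge>N. nv (X n - L) < e)"

definition nv_cauchy :: "('a::field \<Rightarrow> real) \<Rightarrow> (nat \<Rightarrow> 'a) \<Rightarrow> bool" where
  "nv_cauchy nv X \<longleftrightarrow> (\<forall>e>0. \<exists>N. \<forall>m\<ge>N. \<forall>n\<ge>N. nv (X m - X n) < e)"

definition nv_sums :: "('a::field \<Rightarrow> real) \<Rightarrow> (nat \<Rightarrow> 'a) \<Rightarrow> 'a \<Rightarrow> bool" where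
  "nv_sums nv f s \<longleftrightarrow> nv_lim nv (\<lambda>N. \<Sum>n<N. f n) s"

text \<open>nv is a complete non-archimedean absolute value on the field 'a whose restriction
  to the integers is the p-adic absolute value; i.e. ('a, nv) is a complete valued field
  extension of Q_p (e.g. Q_p(chi) or C_p).\<close>
definition padic_valued_field :: "nat \<Rightarrow> ('a::field \<Rightarrow> real) \<Rightarrow> bool" where
  "padic_valued_field p nv \<longleftrightarrow>
     (\<forall>x. 0 \<le> nv x) \<and> (\<forall>x. nv x = 0 \<longleftrightarrow> x = 0) \<and>
     (\<forall>x y. nv (x * y) = nv x * nv y) \<and>
     (\<forall>x y. nv (x + y) \<le> max (nv x) (nv y)) \<and>
     (\<forall>n. nv (of_nat n) = padic_abs p n) \<and>
     (\<forall>X. nv_cauchy nv X \<longrightarrow> (\<exists>L. nv_lim nv X L))"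

definition dirichlet_char :: "nat \<Rightarrow> (nat \<Rightarrow> 'a::field) \<Rightarrow> bool" where
  "dirichlet_char f \<chi> \<longleftrightarrow> f \<ge> 1 \<and> \<chi> 1 = 1 \<and>
     (\<forall>a b. \<chi> (a * b) = \<chi> a * \<chi> b) \<and> (\<forall>a. \<chi> (a + f) = \<chi> a) \<and>
     (\<forall>a. \<chi> a = 0 \<longleftrightarrow> \<not> coprime a f)"

text \<open>chi has conductor f: it is a primitive character mod f (not induced from a proper divisor).\<close>
definition has_conductor :: "(nat \<Rightarrow> 'a::field) \<Rightarrow> nat \<Rightarrow> bool" where
  "has_conductor \<chi> f \<longleftrightarrow> dirichlet_char f \<chi> \<and>
     (\<forall>d. d dvd f \<and> d < f \<longrightarrow>
        (\<exists>a b. coprime a f \<and> coprime b f \<and> [a = b] (mod d) \<and> \<chi> a \<noteq> \<chi> b))"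

definition teich :: "nat \<Rightarrow> ('a::field \<Rightarrow> real) \<Rightarrow> nat \<Rightarrow> 'a" where
  "teich p nv a = (THE w. w ^ (p - 1) = 1 \<and> nv (w - of_nat a) < 1)"

definition angle :: "nat \<Rightarrow> ('a::field \<Rightarrow> real) \<Rightarrow> nat \<Rightarrow> 'a" where
  "angle p nv a = of_nat a / teich p nv a"

definition log_p :: "('a::field \<Rightarrow> real) \<Rightarrow> 'a \<Rightarrow> 'a" where
  "log_p nv x = (THE L. nv_sums nv (\<lambda>k. (-1) ^ k * (x - 1) ^ (k + 1) / of_nat (k + 1)) L)"

definition exp_p :: "('a::field \<Rightarrow> real) \<Rightarrow> 'a \<Rightarrow> 'a" where
  "exp_p nv y = (THE E. nv_sums nv (\<lambda>k. y ^ k / of_nat (fact k)) E)"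

definition ppow :: "('a::field \<Rightarrow> real) \<Rightarrow> 'a \<Rightarrow> 'a \<Rightarrow> 'a" where
  "ppow nv x t = exp_p nv (t * log_p nv x)"

definition euler_partial :: "nat \<Rightarrow> ('a::field \<Rightarrow> real) \<Rightarrow> (nat \<Rightarrow> 'a) \<Rightarrow> nat \<Rightarrow> nat \<Rightarrow> 'a \<Rightarrow> 'a" where
  "euler_partial p nv \<chi> f N s =
     (\<Sum>a\<in>{a. 1 \<le> a \<and> a \<le> f * p ^ N \<and> \<not> p dvd a}.
        (-1) ^ a * \<chi> a * ppow nv (angle p nv a) (1 - s))"

end

theory Submission
  imports Defs
begin


lemma mult_fact_eq:
  assumes "prime (p::nat)"
  shows "multiplicity p (fact k) = k div p + multiplicity p (fact (k div p))"
proof (induction k)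
  case 0 then show ?case by simp
next
  case (Suc k)
  have pp: "p > 1" using assms prime_gt_1_nat by blast
  have m: "multiplicity p (fact (Suc k)) = multiplicity p (fact k) + multiplicity p (Suc k)"
    proof -
    have "fact (Suc k) = (Suc k) * (fact k :: nat)" by (simp add: fact_Suc)
    then show ?thesis using assms prime_elem_multiplicity_mult_distrib[of p "Suc k" "fact k"]
      by (simp del: fact_Suc add: add.commute)
  qed
  show ?case
  proof (cases "p dvd Suc k")
    case False
    then have "Suc k div p = k div p"
      by (simp add: div_Suc dvd_eq_mod_eq_0)
    moreover have "multiplicity p (Suc k) = 0" using False by (rule not_dvd_imp_multiplicity_0)
    ultimately show ?thesis using m Suc by simp
  next
    case True
    then obtain b where b: "Suc k = p * b" by blast
    have b0: "b \<ge> 1" using b by (cases b) auto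
    have d: "Suc k div p = b" using b pp by simp
    have d2: "k div p = b - 1"
    proof (rule div_nat_eqI)
      show "p * (b - 1) \<le> k" using b b0 pp by (simp add: right_diff_distrib')
      show "k < p * Suc (b - 1)" using b b0 by simp
    qed
    have "multiplicity p (Suc k) = Suc (multiplicity p b)" using b b0 pp multiplicity_times_same[where p=p and x=b] by simp
    moreover have "(fact b::nat) = b * fact (b - 1)" using b0 by (metis Suc_diff_1 fact_Suc of_nat_id less_le_trans zero_less_one less_one not_le)
    moreover have "multiplicity p (fact b :: nat) = multiplicity p b + multiplicity p (fact (b - 1) :: nat)"
      using b0 assms calculation(2) by (simp add: prime_elem_multiplicity_mult_distrib)
    ultimately show ?thesis using m Suc d d2 b0 by simp
  qed
qed

lemma mult_fact_le:
  assumes "prime (p::nat)" "k \<ge> 1"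
  shows "multiplicity p (fact k) \<le> k - 1"
  using assms(2)
proof (induction k rule: less_induct)
  case (less k)
  have pp: "p \<ge> 2" using assms prime_ge_2_nat by blast
  show ?case
  proof (cases "k div p = 0")
    case True then show ?thesis using mult_fact_eq[OF assms(1), of k] by simp
  next
    case False
    have lt: "k div p < k" using less.prems pp by simp
    have "multiplicity p (fact (k div p)) \<le> k div p - 1" using less.IH[OF lt] False by simp
    moreover have "2 * (k div p) \<le> k" using pp
      by (metis div_mult_self1_is_m dual_order.trans mult_le_mono1 div_times_less_eq_dividend zero_less_numeral mult.commute)
    ultimately show ?thesis using mult_fact_eq[OF assms(1), of k] False by simp
  qed
qed



lemma padic_abs_le1: "padic_abs p n \<le> 1"
  unfolding padic_abs_def by (cases "p = 0") (auto intro!: one_le_power simp: field_simps)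

lemma padic_abs_dvd:
  assumes "prime p" "p ^ j dvd n"
  shows "padic_abs p n \<le> (1 / real p) ^ j"
proof (cases "n = 0")
  case True then show ?thesis by (simp add: padic_abs_def)
next
  case False
  have p1: "p > 1" using assms prime_gt_1_nat by blast
  have "j \<le> multiplicity p n" using assms False by (intro multiplicity_geI) (auto simp: )
  then have "real p ^ j \<le> real p ^ multiplicity p n" using p1 by (intro power_increasing) auto
  then show ?thesis using False p1 by (simp add: padic_abs_def power_one_over field_simps)
qed

lemma padic_abs_coprime:
  assumes "\<not> p dvd n" shows "padic_abs p n = 1"
proof -
  have "n \<noteq> 0" using assms by (metis dvd_0_right)
  then show ?thesis using assms by (simp add: padic_abs_def not_dvd_imp_multiplicity_0)
qed

lemma padic_abs_self:
  assumes "prime p" shows "padic_abs p p = 1 / real p"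
  using assms by (simp add: padic_abs_def multiplicity_self prime_gt_0_nat field_simps)

lemma padic_abs_fact:
  assumes "prime p" "k \<ge> 1"
  shows "padic_abs p (fact k) \<ge> (1 / real p) ^ (k - 1)"
proof -
  have p1: "p > 1" using assms prime_gt_1_nat by blast
  have "real p ^ multiplicity p (fact k) \<le> real p ^ (k - 1)"
    using p1 mult_fact_le[OF assms] by (intro power_increasing) auto
  then show ?thesis using p1 by (simp add: padic_abs_def power_one_over field_simps)
qed

lemma padic_abs_pos: "n \<noteq> 0 \<Longrightarrow> prime p \<Longrightarrow> padic_abs p n > 0"
  by (simp add: padic_abs_def prime_gt_0_nat)

lemma padic_abs_le_n:
  assumes "prime p" "n \<ge> 1" shows "inverse (padic_abs p n) \<le> real n"
proof -
  have "p ^ multiplicity p n \<le> n" using assms by (intro dvd_imp_le multiplicity_dvd) auto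
  then have "real p ^ multiplicity p n \<le> real n" by (metis of_nat_le_iff of_nat_power)
  then show ?thesis using assms by (simp add: padic_abs_def)
qed

context
  fixes p :: nat and nv :: "'a::field \<Rightarrow> real"
  assumes V: "padic_valued_field p nv" and P: "prime p"
begin

lemma nv_nonneg: "0 \<le> nv x" using V unfolding padic_valued_field_def by blast
lemma nv_zero_iff: "nv x = 0 \<longleftrightarrow> x = 0" using V unfolding padic_valued_field_def by blast
lemma nv_mult: "nv (x * y) = nv x * nv y" using V unfolding padic_valued_field_def by blast
lemma nv_ultra: "nv (x + y) \<le> max (nv x) (nv y)" using V unfolding padic_valued_field_def by blast
lemma nv_nat: "nv (of_nat n) = padic_abs p n" using V unfolding padic_valued_field_def by blast
lemma nv_complete: "nv_cauchy nv X \<Longrightarrow> \<exists>L. nv_lim nv X L" using V unfolding padic_valued_field_def by blast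

lemma nv_0[simp]: "nv 0 = 0" using nv_zero_iff by simp
lemma nv_one[simp]: "nv 1 = 1"
proof -
  have "nv 1 = nv 1 * nv 1" by (metis mult_1 nv_mult)
  moreover have "nv 1 \<noteq> 0" using nv_zero_iff by simp
  ultimately show ?thesis by simp
qed
lemma nv_minus[simp]: "nv (- x) = nv x"
proof -
  have "nv (-1) * nv (-1) = 1" by (metis nv_mult nv_one mult_minus1 minus_minus)
  then have "nv (-1) = 1" using nv_nonneg[of "-1"] by (metis abs_of_nonneg real_sqrt_abs2 real_sqrt_one power2_eq_square)
  then show ?thesis by (metis mult_minus1 nv_mult mult_1)
qed
lemma nv_diff_comm: "nv (x - y) = nv (y - x)" by (metis minus_diff_eq nv_minus)
lemma nv_power: "nv (x ^ n) = nv x ^ n" by (induction n) (auto simp: nv_mult)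
lemma nv_inverse: "nv (inverse x) = inverse (nv x)"
proof (cases "x = 0")
  case False
  then have "nv x * nv (inverse x) = 1" by (metis nv_mult nv_one right_inverse)
  then show ?thesis by (metis inverse_unique)
qed simp
lemma nv_divide: "nv (x / y) = nv x / nv y" by (simp add: divide_inverse nv_mult nv_inverse)
lemma nv_add_le: "nv x \<le> B \<Longrightarrow> nv y \<le> B \<Longrightarrow> nv (x + y) \<le> B" using nv_ultra[of x y] by simp
lemma nv_diff_le: "nv x \<le> B \<Longrightarrow> nv y \<le> B \<Longrightarrow> nv (x - y) \<le> B"
  using nv_add_le[of x B "-y"] by simp
lemma nv_triangle: "nv (x + y) \<le> nv x + nv y" using nv_ultra[of x y] nv_nonneg[of x] nv_nonneg[of y] by simp
lemma nv_sum_le: "finite S \<Longrightarrow> (\<And>i. i \<in> S \<Longrightarrow> nv (f i) \<le> B) \<Longrightarrow> 0 \<le> B \<Longrightarrow> nv (sum f S) \<le> B"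
  by (induction S rule: finite_induct) (auto intro!: nv_add_le)
lemma nv_sum_le_sum: "nv (sum f S) \<le> (\<Sum>i\<in>S. nv (f i))"
proof (cases "finite S")
  case True then show ?thesis
    by (induction S rule: finite_induct) (auto intro: order_trans[OF nv_triangle])
qed simp
lemma nv_of_int: "nv (of_int z) = padic_abs p (nat \<bar>z\<bar>)"
proof (cases "z \<ge> 0")
  case True then show ?thesis by (metis nat_0_le nv_nat of_int_of_nat_eq abs_of_nonneg)
next
  case False
  then have "of_int z = - (of_nat (nat \<bar>z\<bar>) :: 'a)" by simp
  then show ?thesis by (simp only: nv_minus nv_nat)
qed
lemma nv_int_dvd: "int p ^ j dvd z \<Longrightarrow> nv (of_int z) \<le> (1 / real p) ^ j"
  unfolding nv_of_int using P by (intro padic_abs_dvd) (auto simp flip: of_nat_power)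
lemma nv_nat_le1: "nv (of_nat n) \<le> 1" by (simp add: nv_nat padic_abs_le1)
lemma nv_int_le1: "nv (of_int z) \<le> 1" by (simp add: nv_of_int padic_abs_le1)
lemma nv_nat_nz: "n \<noteq> 0 \<Longrightarrow> (of_nat n :: 'a) \<noteq> 0"
  using padic_abs_pos[of n p] P nv_nat[of n] by auto

lemma q_pos: "1 / real p > 0" using P prime_gt_0_nat by simp
lemma q_lt1: "1 / real p < 1"
proof -
  have "real p > 1" using prime_gt_1_nat[OF P] by simp
  then show ?thesis by simp
qed

lemma nv_lim_iff: "nv_lim nv X L \<longleftrightarrow> (\<lambda>N. nv (X N - L)) \<longlonglongrightarrow> 0"
  unfolding nv_lim_def LIMSEQ_iff using nv_nonneg by simp

lemma nv_lim_unique: "nv_lim nv X L \<Longrightarrow> nv_lim nv X M \<Longrightarrow> L = M"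
proof -
  assume a: "nv_lim nv X L" "nv_lim nv X M"
  have "(\<lambda>N. nv (X N - L) + nv (X N - M)) \<longlonglongrightarrow> 0"
    using a tendsto_add[of _ 0 _ _ 0] by (simp add: nv_lim_iff)
  moreover have "\<And>N. nv (L - M) \<le> nv (X N - L) + nv (X N - M)"
  proof -
    fix N
    have "L - M = (X N - M) + (- (X N - L))" by simp
    then have "nv (L - M) \<le> nv (X N - M) + nv (- (X N - L))" using nv_triangle by metis
    then show "nv (L - M) \<le> nv (X N - L) + nv (X N - M)" using nv_diff_comm[of L "X N"] by simp
  qed
  ultimately have "nv (L - M) \<le> 0"
    by (intro tendsto_le[OF _ _ tendsto_const]) auto
  then show ?thesis using nv_nonneg[of "L - M"] nv_zero_iff by simp
qed
end



lemma sum_split_lt: "m \<ge> (n::nat) \<Longrightarrow> (\<Sum>k<m. f k) - (\<Sum>k<n. f k) = (\<Sum>k\<in>{n..<m}. (f k :: 'a::ab_group_add))"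
proof -
  assume "m \<ge> n"
  then have "sum f {0..<m} = sum f {0..<n} + sum f {n..<m}" by (simp add: sum.atLeastLessThan_concat)
  then show ?thesis by (simp add: atLeast0LessThan)
qed

context
  fixes p :: nat and nv :: "'a::field \<Rightarrow> real"
  assumes V: "padic_valued_field p nv" and P: "prime p"
begin

lemmas nvl = nv_nonneg[OF V P] nv_zero_iff[OF V P] nv_mult[OF V P] nv_ultra[OF V P] nv_nat[OF V P]
  nv_minus[OF V P] nv_diff_comm[OF V P] nv_power[OF V P] nv_inverse[OF V P] nv_divide[OF V P]
  nv_add_le[OF V P] nv_diff_le[OF V P] nv_triangle[OF V P] nv_sum_le[OF V P] nv_sum_le_sum[OF V P]
  nv_lim_iff[OF V P] nv_lim_unique[OF V P]

lemma nv_lim_bound: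
  assumes "nv_lim nv X L" "eventually (\<lambda>N. nv (X N - a) \<le> B) sequentially"
  shows "nv (L - a) \<le> B"
proof -
  have t: "(\<lambda>N. nv (X N - L) + B) \<longlonglongrightarrow> 0 + B"
    using assms(1) by (intro tendsto_add tendsto_const) (simp add: nv_lim_iff[OF V P])
  have "eventually (\<lambda>N. nv (L - a) \<le> nv (X N - L) + B) sequentially"
    using assms(2)
  proof eventually_elim
    case (elim N)
    have "L - a = (X N - a) + (- (X N - L))" by simp
    then have "nv (L - a) \<le> nv (X N - a) + nv (- (X N - L))" using nv_triangle[OF V P] by metis
    then show ?case using elim nv_diff_comm[OF V P, of L "X N"] by simp
  qed
  then show ?thesis using tendsto_le[OF _ t tendsto_const] by simp
qed

lemma nv_sandwich:
  fixes g h :: "nat \<Rightarrow> real"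
  assumes "h \<longlonglongrightarrow> 0" "\<And>N. 0 \<le> g N" "\<And>N. g N \<le> h N"
  shows "g \<longlonglongrightarrow> 0"
proof (rule tendsto_sandwich[of "\<lambda>_. 0" g sequentially h 0])
  show "eventually (\<lambda>n. 0 \<le> g n) sequentially" using assms(2) by simp
  show "eventually (\<lambda>n. g n \<le> h n) sequentially" using assms(3) by simp
qed (use assms(1) in auto)

lemma nv_lim_add: "nv_lim nv X A \<Longrightarrow> nv_lim nv Y B \<Longrightarrow> nv_lim nv (\<lambda>N. X N + Y N) (A + B)"
proof -
  assume a: "nv_lim nv X A" "nv_lim nv Y B"
  have h: "(\<lambda>N. nv (X N - A) + nv (Y N - B)) \<longlonglongrightarrow> 0 + 0"
    using a unfolding nv_lim_iff[OF V P] by (intro tendsto_add)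
  have le: "nv (X N + Y N - (A + B)) \<le> nv (X N - A) + nv (Y N - B)" for N
  proof -
    have "X N + Y N - (A + B) = (X N - A) + (Y N - B)" by simp
    then show ?thesis using nv_triangle[OF V P] by metis
  qed
  show ?thesis unfolding nv_lim_iff[OF V P]
    by (rule nv_sandwich[OF _ nv_nonneg[OF V P] le]) (use h in simp)
qed

lemma nv_lim_minus: "nv_lim nv X A \<Longrightarrow> nv_lim nv (\<lambda>N. - X N) (- A)"
proof -
  have "\<And>N. - X N - - A = - (X N - A)" by simp
  then show "nv_lim nv X A \<Longrightarrow> nv_lim nv (\<lambda>N. - X N) (- A)"
    unfolding nv_lim_iff[OF V P] by (simp only: nv_minus[OF V P])
qed

lemma nv_lim_diff: "nv_lim nv X A \<Longrightarrow> nv_lim nv Y B \<Longrightarrow> nv_lim nv (\<lambda>N. X N - Y N) (A - B)"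
  using nv_lim_add[of X A "\<lambda>N. - Y N" "- B"] nv_lim_minus by simp

lemma nv_lim_cmult: "nv_lim nv X A \<Longrightarrow> nv_lim nv (\<lambda>N. c * X N) (c * A)"
proof -
  assume "nv_lim nv X A"
  then have "(\<lambda>N. nv c * nv (X N - A)) \<longlonglongrightarrow> nv c * 0"
    by (intro tendsto_mult tendsto_const) (simp add: nv_lim_iff[OF V P])
  then show ?thesis unfolding nv_lim_iff[OF V P]
    by (simp add: nv_mult[OF V P, symmetric] right_diff_distrib)
qed

lemma nv_lim_const: "nv_lim nv (\<lambda>N. c) c" by (simp add: nv_lim_iff[OF V P] nv_0[OF V P])

lemma nv_lim_sum: "finite S \<Longrightarrow> (\<And>i. i \<in> S \<Longrightarrow> nv_lim nv (X i) (A i)) \<Longrightarrow>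
   nv_lim nv (\<lambda>N. \<Sum>i\<in>S. X i N) (\<Sum>i\<in>S. A i)"
  by (induction S rule: finite_induct) (auto intro!: nv_lim_add nv_lim_const)

lemma nv_sums_add: "nv_sums nv f A \<Longrightarrow> nv_sums nv g B \<Longrightarrow> nv_sums nv (\<lambda>k. f k + g k) (A + B)"
  unfolding nv_sums_def by (drule (1) nv_lim_add) (simp add: sum.distrib)
lemma nv_sums_diff: "nv_sums nv f A \<Longrightarrow> nv_sums nv g B \<Longrightarrow> nv_sums nv (\<lambda>k. f k - g k) (A - B)"
  unfolding nv_sums_def by (drule (1) nv_lim_diff) (simp add: sum_subtractf)
lemma nv_sums_cmult: "nv_sums nv f A \<Longrightarrow> nv_sums nv (\<lambda>k. c * f k) (c * A)"
  unfolding nv_sums_def by (drule nv_lim_cmult[where c=c]) (simp add: sum_distrib_left)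
lemma nv_sums_sum: "finite S \<Longrightarrow> (\<And>i. i \<in> S \<Longrightarrow> nv_sums nv (f i) (A i)) \<Longrightarrow>
   nv_sums nv (\<lambda>k. \<Sum>i\<in>S. f i k) (\<Sum>i\<in>S. A i)"
proof -
  assume a: "finite S" "\<And>i. i \<in> S \<Longrightarrow> nv_sums nv (f i) (A i)"
  have "nv_lim nv (\<lambda>N. \<Sum>i\<in>S. \<Sum>k<N. f i k) (\<Sum>i\<in>S. A i)"
    using a unfolding nv_sums_def by (intro nv_lim_sum) auto
  moreover have "\<And>N. (\<Sum>i\<in>S. \<Sum>k<N. f i k) = (\<Sum>k<N. \<Sum>i\<in>S. f i k)"
    by (rule sum.swap)
  ultimately show ?thesis unfolding nv_sums_def by simp
qed
lemma nv_sums_unique: "nv_sums nv f A \<Longrightarrow> nv_sums nv f B \<Longrightarrow> A = B"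
  unfolding nv_sums_def using nv_lim_unique[OF V P] by blast
lemma nv_sums_the: "nv_sums nv f A \<Longrightarrow> (THE S. nv_sums nv f S) = A"
  using nv_sums_unique by blast

lemma nv_sums_tail_bound:
  assumes "nv_sums nv f S" "\<And>k. k \<ge> n \<Longrightarrow> nv (f k) \<le> B" "0 \<le> B"
  shows "nv (S - (\<Sum>k<n. f k)) \<le> B"
proof (rule nv_lim_bound)
  show "nv_lim nv (\<lambda>N. \<Sum>k<N. f k) S" using assms(1) by (simp add: nv_sums_def)
  show "eventually (\<lambda>N. nv ((\<Sum>k<N. f k) - (\<Sum>k<n. f k)) \<le> B) sequentially"
    using eventually_ge_at_top[of n]
  proof eventually_elim
    case (elim N)
    then show ?case using assms by (simp add: sum_split_lt) (intro nv_sum_le[OF V P], auto)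
  qed
qed

lemma nv_sums_exists:
  assumes "(\<lambda>k. nv (f k)) \<longlonglongrightarrow> 0"
  shows "\<exists>S. nv_sums nv f S"
proof -
  have "nv_cauchy nv (\<lambda>N. \<Sum>k<N. f k)"
    unfolding nv_cauchy_def
  proof (intro allI impI)
    fix e :: real assume e: "e > 0"
    then have "e / 2 > 0" by simp
    with assms obtain N where N: "\<And>k. k \<ge> N \<Longrightarrow> nv (f k) < e / 2"
      unfolding LIMSEQ_iff using nv_nonneg[OF V P] by fastforce
    have key: "nv ((\<Sum>k<m. f k) - (\<Sum>k<n. f k)) < e" if "n \<ge> N" "m \<ge> n" for m n
    proof -
      have "nv (\<Sum>k\<in>{n..<m}. f k) \<le> e / 2"
        using that N e by (intro nv_sum_le[OF V P]) (auto intro: less_imp_le)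
      then show ?thesis using that e by (simp add: sum_split_lt)
    qed
    show "\<exists>N. \<forall>m\<ge>N. \<forall>n\<ge>N. nv ((\<Sum>k<m. f k) - (\<Sum>k<n. f k)) < e"
    proof (intro exI allI impI)
      fix m n assume "m \<ge> N" "n \<ge> N"
      then show "nv ((\<Sum>k<m. f k) - (\<Sum>k<n. f k)) < e"
      proof (cases "m \<ge> n")
        case True then show ?thesis using key \<open>n \<ge> N\<close> by blast
      next
        case False
        then have "nv ((\<Sum>k<n. f k) - (\<Sum>k<m. f k)) < e" using key \<open>m \<ge> N\<close> by simp
        then show ?thesis using nv_diff_comm[OF V P] by metis
      qed
    qed
  qed
  then show ?thesis using nv_complete[OF V P] by (auto simp: nv_sums_def)
qed

lemma nv_sums_terms0:
  assumes "nv_sums nv f S" shows "(\<lambda>k. nv (f k)) \<longlonglongrightarrow> 0"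
proof -
  have l: "(\<lambda>N. nv ((\<Sum>k<N. f k) - S)) \<longlonglongrightarrow> 0"
    using assms by (simp add: nv_sums_def nv_lim_iff[OF V P])
  have "(\<lambda>N. nv ((\<Sum>k<Suc N. f k) - S)) \<longlonglongrightarrow> 0" using LIMSEQ_Suc[OF l] .
  then have "(\<lambda>N. nv ((\<Sum>k<Suc N. f k) - S) + nv ((\<Sum>k<N. f k) - S)) \<longlonglongrightarrow> 0 + 0"
    using l by (intro tendsto_add)
  moreover have "nv (f N) \<le> nv ((\<Sum>k<Suc N. f k) - S) + nv ((\<Sum>k<N. f k) - S)" for N
  proof -
    have "f N = ((\<Sum>k<Suc N. f k) - S) + (- ((\<Sum>k<N. f k) - S))" by simp
    then have "nv (f N) \<le> nv ((\<Sum>k<Suc N. f k) - S) + nv (- ((\<Sum>k<N. f k) - S))"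
      using nv_triangle[OF V P] by metis
    then show ?thesis by (simp only: nv_minus[OF V P])
  qed
  ultimately show ?thesis
    by (intro nv_sandwich[OF _ nv_nonneg[OF V P]]) auto
qed

lemma nv_sums_terms_bounded:
  assumes "nv_sums nv f S" shows "\<exists>K. \<forall>k. nv (f k) \<le> K"
proof -
  have "convergent (\<lambda>k. nv (f k))" using nv_sums_terms0[OF assms] by (auto simp: convergent_def)
  then have "Bseq (\<lambda>k. nv (f k))" by (rule convergent_imp_Bseq)
  then show ?thesis unfolding Bseq_def by (metis abs_le_D1 real_norm_def)
qed

end



context
  fixes p :: nat and nv :: "'a::field \<Rightarrow> real"
  assumes V: "padic_valued_field p nv" and P: "prime p"
begin

lemma nv_ppow: "nv (of_nat (p ^ m) :: 'a) = (1 / real p) ^ m"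
proof -
  have "nv (of_nat (p ^ m) :: 'a) = padic_abs p (p ^ m)" by (rule nv_nat[OF V P])
  also have "\<dots> = (1 / real p) ^ m" using P
    by (simp add: padic_abs_def power_one_over prime_gt_0_nat prime_imp_prime_elem inverse_eq_divide)
  finally show ?thesis .
qed

lemma coeff_limit:
  fixes e F :: "nat \<Rightarrow> nat \<Rightarrow> 'a" and K :: real and m0 :: nat
  assumes K0: "K \<ge> 0"
    and bound: "\<And>N k. nv (e N k) \<le> K * (real p ^ m0) ^ k"
    and sums: "\<And>N m. m > m0 \<Longrightarrow> nv_sums nv (\<lambda>k. e N k * (of_nat (p ^ m)) ^ k) (F N m)"
    and lim: "\<And>m. m > m0 \<Longrightarrow> nv_lim nv (\<lambda>N. F N m) 0"
  shows "nv_lim nv (\<lambda>N. e N n) 0"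
proof (induction n rule: less_induct)
  case (less n)
  define q where "q = 1 / real p"
  define R where "R = real p ^ m0"
  have q0: "q > 0" and q1: "q < 1" using q_pos[OF V P] q_lt1[OF V P] by (auto simp: q_def)
  have R0: "R > 0" using P prime_gt_0_nat by (simp add: R_def)
  have qR: "q ^ m0 * R = 1" using R0 by (simp add: q_def R_def power_one_over)
  show ?case unfolding nv_lim_def
  proof (intro allI impI)
    fix \<epsilon> :: real assume eps: "\<epsilon> > 0"
    have "(\<lambda>j. K * R ^ n * q ^ j) \<longlonglongrightarrow> K * R ^ n * 0"
      using q0 q1 by (intro tendsto_mult tendsto_const LIMSEQ_power_zero) auto
    then have "eventually (\<lambda>j. K * R ^ n * q ^ j < \<epsilon>) sequentially"
      using eps by (intro order_tendstoD(2)) auto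
    then obtain J where J: "\<And>j. j \<ge> J \<Longrightarrow> K * R ^ n * q ^ j < \<epsilon>"
      unfolding eventually_sequentially by blast
    define j where "j = Suc J"
    define m where "m = m0 + j"
    define r where "r = q ^ j"
    define t :: 'a where "t = of_nat (p ^ m)"
    have mm: "m > m0" by (simp add: m_def j_def)
    have Kr: "K * R ^ n * r < \<epsilon>" using J[of j] by (simp add: r_def j_def)
    have r0: "r > 0" and r1: "r \<le> 1" using q0 q1 by (auto simp: r_def power_le_one)
    have nvt: "nv t = q ^ m" unfolding t_def q_def by (rule nv_ppow)
    have Rq: "R * q ^ m = r" using qR by (simp add: m_def r_def power_add algebra_simps)
    have tail: "nv (F N m - (\<Sum>k<Suc n. e N k * t ^ k)) \<le> K * r ^ Suc n" for N
    proof (rule nv_sums_tail_bound[OF V P])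
      show "nv_sums nv (\<lambda>k. e N k * t ^ k) (F N m)" using sums[OF mm] by (simp add: t_def)
      show "0 \<le> K * r ^ Suc n" using K0 r0 by simp
      fix k assume k: "k \<ge> Suc n"
      have "nv (e N k * t ^ k) = nv (e N k) * q ^ (m * k)"
        by (simp add: nv_mult[OF V P] nv_power[OF V P] nvt power_mult)
      also have "\<dots> \<le> K * R ^ k * q ^ (m * k)"
        using bound[of N k] q0 by (intro mult_right_mono) (auto simp: R_def power_mult)
      also have "\<dots> = K * (R * q ^ m) ^ k"
        by (simp add: power_mult_distrib flip: power_mult)
      also have "\<dots> = K * r ^ k" using Rq by simp
      also have "\<dots> \<le> K * r ^ Suc n" using K0 r0 r1 k by (intro mult_left_mono power_decreasing) auto
      finally show "nv (e N k * t ^ k) \<le> K * r ^ Suc n" .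
    qed
    have conv: "nv_lim nv (\<lambda>N. F N m - (\<Sum>k<n. e N k * t ^ k)) 0"
    proof -
      have "nv_lim nv (\<lambda>N. \<Sum>k<n. t ^ k * e N k) (\<Sum>k<n. t ^ k * 0)"
        by (intro nv_lim_sum[OF V P] nv_lim_cmult[OF V P] less.IH) auto
      then have "nv_lim nv (\<lambda>N. F N m - (\<Sum>k<n. t ^ k * e N k)) (0 - 0)"
        using lim[OF mm] by (intro nv_lim_diff[OF V P]) auto
      then show ?thesis by (simp add: mult.commute)
    qed
    have pos: "\<epsilon> * (q ^ m) ^ n > 0" using eps q0 by simp
    then obtain N0 where N0: "\<And>N. N \<ge> N0 \<Longrightarrow> nv (F N m - (\<Sum>k<n. e N k * t ^ k) - 0) < \<epsilon> * (q ^ m) ^ n"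
      using conv unfolding nv_lim_def by blast
    have small: "K * r ^ Suc n < \<epsilon> * (q ^ m) ^ n"
    proof -
      have "(q ^ m) ^ n * R ^ n = r ^ n" using Rq by (metis power_mult_distrib mult.commute)
      then have "K * r ^ Suc n = (K * R ^ n * r) * (q ^ m) ^ n" by (simp add: algebra_simps)
      also have "\<dots> < \<epsilon> * (q ^ m) ^ n" using Kr q0 by (intro mult_strict_right_mono) auto
      finally show ?thesis .
    qed
    show "\<exists>N. \<forall>n'\<ge>N. nv (e n' n - 0) < \<epsilon>"
    proof (intro exI allI impI)
      fix N assume N: "N \<ge> N0"
      have eq: "e N n * t ^ n = (F N m - (\<Sum>k<n. e N k * t ^ k)) - (F N m - (\<Sum>k<Suc n. e N k * t ^ k))"
        by simp
      have "nv (e N n * t ^ n) < \<epsilon> * (q ^ m) ^ n"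
        unfolding eq using N0[OF N] tail[of N] small
        by (intro le_less_trans[OF nv_diff_le[OF V P, of _ "max _ _"]]) (auto simp: max_def)
      then have "nv (e N n) * (q ^ m) ^ n < \<epsilon> * (q ^ m) ^ n"
        by (simp add: nv_mult[OF V P] nv_power[OF V P] nvt)
      then show "nv (e N n - 0) < \<epsilon>" using q0 by simp
    qed
  qed
qed

end



lemma lift1:
  fixes x y :: int
  assumes "prime p" "int p ^ Suc j dvd x - y"
  shows "int p ^ Suc (Suc j) dvd x ^ p - y ^ p"
proof -
  have eq: "x ^ p - y ^ p = (x - y) * (\<Sum>i<p. y ^ (p - Suc i) * x ^ i)" by (rule power_diff_sumr2)
  have "int p dvd x - y" using assms(2) by (metis dvd_power dvd_trans zero_less_Suc)
  then have xy: "[x = y] (mod int p)" by (simp add: cong_iff_dvd_diff)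
  have "[(\<Sum>i<p. y ^ (p - Suc i) * x ^ i) = (\<Sum>i<p. y ^ (p - Suc i) * y ^ i)] (mod int p)"
    by (intro cong_sum cong_mult cong_refl cong_pow xy)
  also have "(\<Sum>i<p. y ^ (p - Suc i) * y ^ i) = (\<Sum>i<p. y ^ (p - 1))"
    by (intro sum.cong refl) (simp add: power_add[symmetric])
  also have "\<dots> = int p * y ^ (p - 1)" by simp
  finally have "int p dvd (\<Sum>i<p. y ^ (p - Suc i) * x ^ i)" by (simp add: cong_0_iff cong_dvd_iff)
  then have "int p ^ Suc j * int p dvd (x - y) * (\<Sum>i<p. y ^ (p - Suc i) * x ^ i)"
    using assms(2) by (rule mult_dvd_mono[rotated])
  then show ?thesis by (simp add: eq mult.commute)
qed

lemma liftn:
  fixes x y :: int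
  assumes "prime p" "int p dvd x - y"
  shows "int p ^ Suc j dvd x ^ (p ^ j) - y ^ (p ^ j)"
proof (induction j)
  case 0 then show ?case using assms by simp
next
  case (Suc j)
  have "int p ^ Suc (Suc j) dvd (x ^ (p ^ j)) ^ p - (y ^ (p ^ j)) ^ p" by (rule lift1[OF assms(1) Suc])
  then show ?case by (simp add: power_mult[symmetric] mult.commute)
qed

lemma fermat_int:
  assumes "prime p" "\<not> p dvd a"
  shows "int p dvd int a ^ (p - 1) - 1" "int p dvd int a ^ p - int a"
proof -
  have "[a ^ (p - 1) = 1] (mod p)" by (rule fermat_theorem[OF assms])
  then have c: "[int a ^ (p - 1) = 1] (mod int p)" by (metis cong_int_iff of_nat_1 of_nat_power)
  then show "int p dvd int a ^ (p - 1) - 1" by (simp add: cong_iff_dvd_diff)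
  have "[int a * int a ^ (p - 1) = int a * 1] (mod int p)" by (intro cong_mult cong_refl c)
  moreover have "int a * int a ^ (p - 1) = int a ^ p" using prime_gt_0_nat[OF assms(1)]
    by (simp add: power_Suc[symmetric])
  ultimately show "int p dvd int a ^ p - int a" by (simp add: cong_iff_dvd_diff)
qed

context
  fixes p :: nat and nv :: "'a::field \<Rightarrow> real"
  assumes V: "padic_valued_field p nv" and P: "prime p"
begin

lemma nv_cong: "int p ^ j dvd int x - int y \<Longrightarrow> nv (of_nat x - of_nat y :: 'a) \<le> (1 / real p) ^ j"
proof -
  assume "int p ^ j dvd int x - int y"
  then have "nv (of_int (int x - int y) :: 'a) \<le> (1 / real p) ^ j" by (rule nv_int_dvd[OF V P])
  then show ?thesis by simp
qed

lemma nv_cong1: "int p ^ j dvd int x - 1 \<Longrightarrow> nv (of_nat x - 1 :: 'a) \<le> (1 / real p) ^ j"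
  using nv_cong[of j x 1] by simp

lemma nv_pow_one: "w ^ n = 1 \<Longrightarrow> n > 0 \<Longrightarrow> nv w = 1"
  using nv_power[OF V P, of w n] nv_nonneg[OF V P, of w] power_eq_imp_eq_base[of "nv w" n 1] nv_one[OF V P] by simp

lemma nv_sum_powers_le1:
  assumes "nv x \<le> 1" "nv y \<le> 1"
  shows "nv (\<Sum>i<n. y ^ (n - Suc i) * x ^ i) \<le> 1"
  using assms by (intro nv_sum_le[OF V P])
     (auto simp: nv_mult[OF V P] nv_power[OF V P] nv_nonneg[OF V P] intro!: mult_le_one power_le_one)

lemma nv_powdiff_le:
  assumes "nv x \<le> 1" "nv y \<le> 1"
  shows "nv (x ^ n - y ^ n) \<le> nv (x - y)"
proof -
  have "nv (x ^ n - y ^ n) = nv (x - y) * nv (\<Sum>i<n. y ^ (n - Suc i) * x ^ i)"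
    by (simp add: power_diff_sumr2 nv_mult[OF V P])
  also have "\<dots> \<le> nv (x - y) * 1"
    using nv_sum_powers_le1[OF assms] nv_nonneg[OF V P] by (intro mult_left_mono) auto
  finally show ?thesis by simp
qed

lemma teich_unique:
  assumes w1: "w1 ^ (p - 1) = 1" "nv (w1 - of_nat a) < 1"
    and w2: "w2 ^ (p - 1) = 1" "nv (w2 - of_nat a) < 1"
  shows "w1 = w2"
proof (rule ccontr)
  assume ne: "w1 \<noteq> w2"
  have p1: "p - 1 > 0" using prime_gt_1_nat[OF P] by simp
  have n1: "nv w1 = 1" "nv w2 = 1" using nv_pow_one w1(1) w2(1) p1 by auto
  define d where "d = nv (w1 - w2)"
  have "w1 - w2 = (w1 - of_nat a) - (w2 - of_nat a)" by simp
  then have d1: "d < 1" unfolding d_def using w1(2) w2(2)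
    by (metis nv_ultra[OF V P] diff_conv_add_uminus nv_minus[OF V P] max_less_iff_conj order.strict_trans1)
  define S where "S = (\<Sum>i<p - 1. w2 ^ (p - 1 - Suc i) * w1 ^ i)"
  have "0 = w1 ^ (p - 1) - w2 ^ (p - 1)" using w1 w2 by simp
  also have "\<dots> = (w1 - w2) * S" unfolding S_def by (rule power_diff_sumr2)
  finally have S0: "S = 0" using ne by simp
  have "S - of_nat (p - 1) * w2 ^ (p - 2) = (\<Sum>i<p - 1. w2 ^ (p - 1 - Suc i) * (w1 ^ i - w2 ^ i))"
  proof -
    have "(\<Sum>i<p - 1. w2 ^ (p - 1 - Suc i) * (w1 ^ i - w2 ^ i))
        = S - (\<Sum>i<p - 1. w2 ^ (p - 1 - Suc i) * w2 ^ i)"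
      unfolding S_def by (simp add: right_diff_distrib sum_subtractf)
    also have "(\<Sum>i<p - 1. w2 ^ (p - 1 - Suc i) * w2 ^ i) = (\<Sum>i<p - 1. w2 ^ (p - 2))"
      by (intro sum.cong refl) (simp add: power_add[symmetric])
    finally show ?thesis by simp
  qed
  moreover have "nv (\<Sum>i<p - 1. w2 ^ (p - 1 - Suc i) * (w1 ^ i - w2 ^ i)) \<le> d"
    unfolding d_def using n1
    by (intro nv_sum_le[OF V P]) (auto simp: nv_mult[OF V P] nv_power[OF V P] nv_nonneg[OF V P]
        intro!: nv_powdiff_le)
  ultimately have "nv (- (of_nat (p - 1) * w2 ^ (p - 2))) \<le> d" using S0 by simp
  moreover have "nv (of_nat (p - 1) * w2 ^ (p - 2) :: 'a) = 1"
  proof -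
    have "\<not> p dvd p - 1"
    proof
      assume "p dvd p - 1"
      then have "p \<le> p - 1" using p1 by (intro dvd_imp_le) auto
      then show False using p1 by simp
    qed
    then show ?thesis using n1 by (simp add: nv_mult[OF V P] nv_power[OF V P] nv_nat[OF V P] padic_abs_coprime)
  qed
  ultimately show False using d1 by (simp add: nv_minus[OF V P])
qed


lemma nv_small_zero: "(\<And>n. nv z \<le> (1 / real p) ^ n) \<Longrightarrow> z = 0"
proof (rule ccontr)
  assume h: "\<And>n. nv z \<le> (1 / real p) ^ n" and "z \<noteq> 0"
  then have "nv z > 0" using nv_nonneg[OF V P, of z] nv_zero_iff[OF V P, of z] by simp
  then obtain n where "(1 / real p) ^ n < nv z" using real_arch_pow_inv q_pos[OF V P] q_lt1[OF V P] by blast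
  then show False using h[of n] by simp
qed

lemma teich_exists:
  assumes na: "\<not> p dvd a"
  shows "\<exists>W::'a. W ^ (p - 1) = 1 \<and> nv (W - of_nat a) \<le> 1 / real p"
proof -
  define q where "q = 1 / real p"
  have q0: "q > 0" and q1: "q < 1" using q_pos[OF V P] q_lt1[OF V P] by (auto simp: q_def)
  define X where "X j = (of_nat (a ^ (p ^ j)) :: 'a)" for j
  have step: "nv (X (Suc j) - X j) \<le> q ^ Suc j" for j
  proof -
    have "int p ^ Suc j dvd (int a ^ p) ^ (p ^ j) - (int a) ^ (p ^ j)"
      by (rule liftn[OF P fermat_int(2)[OF P na]])
    then have "int p ^ Suc j dvd int (a ^ (p ^ Suc j)) - int (a ^ (p ^ j))"
      by (simp add: power_mult[symmetric])
    then show ?thesis unfolding X_def q_def by (rule nv_cong)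
  qed
  have dist: "nv (X (n + d) - X n) \<le> q ^ Suc n" for n d
  proof (induction d)
    case 0 then show ?case using q0 by (simp add: nv_0[OF V P])
  next
    case (Suc d)
    have eq: "X (n + Suc d) - X n = (X (Suc (n + d)) - X (n + d)) + (X (n + d) - X n)" by simp
    have s1: "nv (X (Suc (n + d)) - X (n + d)) \<le> q ^ Suc n"
      using step[of "n + d"] power_decreasing[of "Suc n" "Suc (n + d)" q] q0 q1
      by (simp only: order_trans)
    show ?case unfolding eq by (rule nv_add_le[OF V P, OF s1 Suc])
  qed
  have dist2: "nv (X m - X n) \<le> q ^ Suc n" if "m \<ge> n" for m n
    using dist[of n "m - n"] that by simp
  have "nv_cauchy nv X" unfolding nv_cauchy_def
  proof (intro allI impI)
    fix e :: real assume e: "e > 0"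
    obtain N where N: "q ^ N < e" using real_arch_pow_inv[OF e q1] by blast
    show "\<exists>N. \<forall>m\<ge>N. \<forall>n\<ge>N. nv (X m - X n) < e"
    proof (intro exI allI impI)
      fix m n assume mn: "m \<ge> N" "n \<ge> N"
      have b: "q ^ Suc k < e" if "k \<ge> N" for k
        using power_decreasing[of N "Suc k" q] q0 q1 that N by simp
      show "nv (X m - X n) < e"
      proof (cases "m \<ge> n")
        case True then show ?thesis using dist2[OF True] b[OF mn(2)] by simp
      next
        case False
        then have "nv (X n - X m) \<le> q ^ Suc m" using dist2[of m n] by simp
        then show ?thesis using b[OF mn(1)] nv_diff_comm[OF V P, of "X m"] by simp
      qed
    qed
  qed
  then obtain W where W: "nv_lim nv X W" using nv_complete[OF V P] by blast
  have WX: "nv (W - X n) \<le> q ^ Suc n" for n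
    using W by (rule nv_lim_bound[OF V P]) (use dist2 in \<open>auto simp add: eventually_sequentially\<close>)
  have X0: "X 0 = of_nat a" by (simp add: X_def)
  have Xle: "nv (X n) \<le> 1" for n unfolding X_def by (rule nv_nat_le1[OF V P])
  have Wle: "nv W \<le> 1"
  proof -
    have "W = (W - X 0) + X 0" by simp
    moreover have "nv (W - X 0) \<le> 1" using WX[of 0] q1 by simp
    ultimately show ?thesis using Xle[of 0] by (metis nv_add_le[OF V P])
  qed
  have "W ^ (p - 1) - 1 = 0"
  proof (rule nv_small_zero)
    fix n
    have "W ^ (p - 1) - 1 = (W ^ (p - 1) - X n ^ (p - 1)) + (X n ^ (p - 1) - 1)" by simp
    moreover have "nv (W ^ (p - 1) - X n ^ (p - 1)) \<le> q ^ Suc n"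
      using nv_powdiff_le[OF Wle Xle[of n], of "p - 1"] WX[of n] by simp
    moreover have "nv (X n ^ (p - 1) - 1) \<le> q ^ Suc n"
    proof -
      have "int p ^ Suc n dvd (int a ^ (p - 1)) ^ (p ^ n) - 1 ^ (p ^ n)"
        by (rule liftn[OF P]) (use fermat_int(1)[OF P na] in simp)
      then have "int p ^ Suc n dvd int ((a ^ (p ^ n)) ^ (p - 1)) - 1"
        by (simp add: power_mult[symmetric] mult.commute)
      then show ?thesis unfolding X_def q_def using nv_cong1[of "Suc n"] by (simp del: of_nat_power add: of_nat_power[symmetric])
    qed
    ultimately have "nv (W ^ (p - 1) - 1) \<le> q ^ Suc n" by (metis nv_add_le[OF V P])
    also have "\<dots> \<le> q ^ n" using q0 q1 by (intro power_decreasing) auto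
    finally show "nv (W ^ (p - 1) - 1) \<le> (1 / real p) ^ n" by (simp add: q_def)
  qed
  moreover have "nv (W - of_nat a) \<le> 1 / real p" using WX[of 0] X0 by (simp add: q_def)
  ultimately show ?thesis by auto
qed

lemma teich_char:
  assumes "\<not> p dvd a"
  shows "teich p nv a ^ (p - 1) = 1 \<and> nv (teich p nv a - of_nat a) \<le> 1 / real p"
proof -
  obtain W :: 'a where W: "W ^ (p - 1) = 1" "nv (W - of_nat a) \<le> 1 / real p"
    using teich_exists[OF assms] by blast
  have W1: "nv (W - of_nat a) < 1" using W(2) q_lt1[OF V P] by simp
  have "teich p nv a = W" unfolding teich_def
  proof (rule the_equality)
    show "W ^ (p - 1) = 1 \<and> nv (W - of_nat a) < 1" using W(1) W1 by simp
    fix w assume "w ^ (p - 1) = 1 \<and> nv (w - of_nat a) < 1"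
    then show "w = W" using teich_unique W(1) W1 by blast
  qed
  then show ?thesis using W by simp
qed

lemma angle_close:
  assumes "\<not> p dvd a"
  shows "nv (angle p nv a - 1) \<le> 1 / real p"
proof -
  define W where "W = (teich p nv a :: 'a)"
  have W: "W ^ (p - 1) = 1" "nv (W - of_nat a) \<le> 1 / real p" using teich_char[OF assms] by (auto simp: W_def)
  have W1: "nv W = 1" using nv_pow_one W(1) prime_gt_1_nat[OF P] by simp
  then have "W \<noteq> 0" using nv_0[OF V P] by auto
  then have "angle p nv a - 1 = (of_nat a - W) / W" by (simp add: angle_def W_def field_simps)
  then show ?thesis using W1 W(2) nv_diff_comm[OF V P, of W] by (simp add: nv_divide[OF V P])
qed

end



lemma suc_le_pow2: "Suc k \<le> 2 ^ k"
  by (induction k) auto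

context
  fixes p :: nat and nv :: "'a::field \<Rightarrow> real"
  assumes V: "padic_valued_field p nv" and P: "prime p"
begin

lemma nv_sign: "nv ((-1) ^ k :: 'a) = 1"
  by (simp add: nv_power[OF V P] nv_minus[OF V P] nv_one[OF V P])

lemma log_bound:
  assumes x: "nv (x - 1) \<le> 1 / real p"
  shows "nv (log_p nv x) \<le> 1 / real p"
proof -
  define q where "q = 1 / real p"
  have q0: "q > 0" and q1: "q < 1" using q_pos[OF V P] q_lt1[OF V P] by (auto simp: q_def)
  define g where "g k = (-1) ^ k * (x - 1) ^ (k + 1) / of_nat (k + 1)" for k
  have nvg: "nv (g k) \<le> real (k + 1) * q ^ (k + 1)" for k
  proof -
    have "nv (g k) = nv ((-1) ^ k :: 'a) * nv (x - 1) ^ (k + 1) / nv (of_nat (k + 1) :: 'a)"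
      unfolding g_def by (simp only: nv_mult[OF V P] nv_divide[OF V P] nv_power[OF V P])
    also have "\<dots> = nv (x - 1) ^ (k + 1) * inverse (padic_abs p (k + 1))"
      by (simp only: nv_sign nv_nat[OF V P]) (simp add: divide_inverse)
    also have "\<dots> \<le> q ^ (k + 1) * real (k + 1)"
      using x nv_nonneg[OF V P] padic_abs_le_n[OF P, of "k + 1"] padic_abs_pos[of "k+1" p] P
      by (intro mult_mono power_mono) (auto simp: q_def)
    finally show ?thesis by (simp add: mult.commute)
  qed
  have gq: "nv (g k) \<le> q" for k
  proof -
    have "real (k + 1) \<le> real p ^ k"
    proof -
      have "Suc k \<le> 2 ^ k" by (rule suc_le_pow2)
      also have "(2::nat) ^ k \<le> p ^ k" using prime_ge_2_nat[OF P] by (intro power_mono) auto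
      finally show ?thesis by (metis Suc_eq_plus1 of_nat_le_iff of_nat_power)
    qed
    then have "real (k + 1) * q ^ (k + 1) \<le> real p ^ k * q ^ (k + 1)" using q0 by (intro mult_right_mono) auto
    also have "\<dots> = q" using P prime_gt_0_nat by (simp add: q_def power_one_over)
    finally show ?thesis using nvg[of k] by simp
  qed
  have lim0: "(\<lambda>k. real (k + 1) * q ^ (k + 1)) \<longlonglongrightarrow> 0"
    using LIMSEQ_Suc[OF powser_times_n_limit_0[of q]] q0 q1 by simp
  have "(\<lambda>k. nv (g k)) \<longlonglongrightarrow> 0"
    by (rule nv_sandwich[OF V P lim0 nv_nonneg[OF V P] nvg])
  then obtain S where S: "nv_sums nv g S" using nv_sums_exists[OF V P] by blast
  have gg: "(\<lambda>k. (-1) ^ k * (x - 1) ^ (k + 1) / of_nat (k + 1)) = g" by (simp add: g_def fun_eq_iff)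
  have "log_p nv x = S" unfolding log_p_def gg by (rule nv_sums_the[OF V P S])
  moreover have "nv (S - (\<Sum>k<0. g k)) \<le> q"
    by (rule nv_sums_tail_bound[OF V P S]) (use gq q0 in auto)
  ultimately show ?thesis by (simp add: q_def)
qed

lemma coef_bound:
  assumes L: "nv L \<le> 1 / real p"
  shows "nv (L ^ k / of_nat (fact k)) \<le> (if k = 0 then 1 else 1 / real p)"
proof (cases "k = 0")
  case True then show ?thesis by (simp add: nv_one[OF V P])
next
  case False
  define q where "q = 1 / real p"
  have q0: "q > 0" using q_pos[OF V P] by (auto simp: q_def)
  have pf: "padic_abs p (fact k) \<ge> q ^ (k - 1)" using padic_abs_fact[OF P, of k] False by (simp add: q_def)
  have "nv (L ^ k / of_nat (fact k)) = nv L ^ k / padic_abs p (fact k)"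
    by (simp add: nv_divide[OF V P] nv_power[OF V P] nv_nat[OF V P])
  also have "\<dots> \<le> q ^ k / q ^ (k - 1)"
    using L nv_nonneg[OF V P] pf q0 by (intro frac_le power_mono) (auto simp: q_def)
  also have "\<dots> = q" using False q0 by (cases k) auto
  finally show ?thesis using False by (simp add: q_def)
qed

lemma exp_series:
  assumes L: "nv L \<le> 1 / real p" and t: "nv t < 1"
  shows "nv_sums nv (\<lambda>k. (L ^ k / of_nat (fact k)) * t ^ k) (exp_p nv (t * L))"
proof -
  have b: "nv ((L ^ k / of_nat (fact k)) * t ^ k) \<le> nv t ^ k" for k
  proof -
    have "nv (L ^ k / of_nat (fact k)) \<le> 1" using coef_bound[OF L, of k] q_lt1[OF V P] by (auto split: if_splits)
    then show ?thesis using nv_nonneg[OF V P, of t] nv_nonneg[OF V P, of "L ^ k / of_nat (fact k)"]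
      by (simp only: nv_mult[OF V P] nv_power[OF V P]) (simp add: mult_left_le_one_le)
  qed
  have "(\<lambda>k. nv t ^ k) \<longlonglongrightarrow> 0" using t nv_nonneg[OF V P, of t] by (intro LIMSEQ_power_zero) auto
  then have "(\<lambda>k. nv ((L ^ k / of_nat (fact k)) * t ^ k)) \<longlonglongrightarrow> 0"
    by (rule nv_sandwich[OF V P _ nv_nonneg[OF V P] b])
  then obtain S where S: "nv_sums nv (\<lambda>k. (L ^ k / of_nat (fact k)) * t ^ k) S"
    using nv_sums_exists[OF V P] by presburger
  have eq: "(\<lambda>k. (t * L) ^ k / of_nat (fact k)) = (\<lambda>k. (L ^ k / of_nat (fact k)) * t ^ k)"
    by (simp add: power_mult_distrib field_simps)
  have "exp_p nv (t * L) = S" unfolding exp_p_def eq by (rule nv_sums_the[OF V P S])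
  then show ?thesis using S by simp
qed

end



lemma chi_periodic:
  assumes "dirichlet_char f \<chi>" shows "\<chi> (b + f * k) = \<chi> b"
proof (induction k)
  case (Suc k)
  have "\<chi> (b + f * Suc k) = \<chi> ((b + f * k) + f)" by (simp add: algebra_simps)
  also have "\<dots> = \<chi> (b + f * k)" using assms by (simp add: dirichlet_char_def)
  finally show ?case using Suc by simp
qed simp

lemma chi_mod:
  assumes "dirichlet_char f \<chi>" shows "\<chi> x = \<chi> (x mod f)"
  using chi_periodic[OF assms, of "x mod f" "x div f"] by simp

lemma chi_pow:
  assumes "dirichlet_char f \<chi>" shows "\<chi> (a ^ n) = \<chi> a ^ n"
  using assms by (induction n) (auto simp: dirichlet_char_def)

context
  fixes p :: nat and nv :: "'a::field \<Rightarrow> real"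
  assumes V: "padic_valued_field p nv" and P: "prime p"
begin

lemma chi_bound:
  assumes D: "dirichlet_char f (\<chi> :: nat \<Rightarrow> 'a)" shows "nv (\<chi> a) \<le> 1"
proof (cases "coprime a f")
  case False
  then have "\<chi> a = 0" using D by (simp add: dirichlet_char_def)
  then show ?thesis by (simp add: nv_0[OF V P])
next
  case True
  have f1: "f \<ge> 1" using D by (simp add: dirichlet_char_def)
  have "[a ^ totient f = 1] (mod f)" by (rule euler_theorem[OF True])
  then have "(a ^ totient f) mod f = 1 mod f" by (simp add: cong_def)
  then have "\<chi> (a ^ totient f) = \<chi> 1" using chi_mod[OF D, of "a ^ totient f"] chi_mod[OF D, of 1] by simp
  then have "\<chi> a ^ totient f = 1" using D by (simp add: chi_pow[OF D] dirichlet_char_def)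
  then have "nv (\<chi> a) = 1" using f1 by (intro nv_pow_one[OF V P]) auto
  then show ?thesis by simp
qed

end

theorem corollary3p7:
  fixes p f :: nat and nv :: "'a::field \<Rightarrow> real" and \<chi> :: "nat \<Rightarrow> 'a"
    and ell :: "'a \<Rightarrow> 'a" and c :: "nat \<Rightarrow> 'a" and r :: real
  assumes "prime p" and "odd p"
    and "padic_valued_field p nv"
    and "has_conductor \<chi> f" and "\<chi> \<noteq> (\<lambda>_. 1)"
    and "odd f" and "\<not> p ^ 2 dvd f"
    and "r > 0"
    and "\<forall>s. nv (s - 1) < r \<longrightarrow>
           nv_lim nv (\<lambda>N. euler_partial p nv \<chi> f N s) (ell s) \<and>
           nv_sums nv (\<lambda>n. c n * (1 - s) ^ n) (ell s)"
  shows "nv (c 0) \<le> 1 \<and> (\<forall>n\<ge>1. nv (c n) \<le> padic_abs p p)"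
proof -
  note P = assms(1) and V = assms(3) and hyp = assms(9)
  have D: "dirichlet_char f \<chi>" using assms(4) by (simp add: has_conductor_def)
  define q where "q = 1 / real p"
  have q0: "q > 0" and q1: "q < 1" using q_pos[OF V P] q_lt1[OF V P] by (auto simp: q_def)
  obtain m1 where m1: "q ^ m1 < r" using real_arch_pow_inv[OF assms(8) q1] by blast
  define m0 where "m0 = Suc m1"
  have m0r: "q ^ m0 < r"
  proof -
    have "q ^ m0 \<le> q ^ m1" using q0 q1 by (intro power_decreasing) (auto simp: m0_def)
    then show ?thesis using m1 by simp
  qed
  define t :: "nat \<Rightarrow> 'a" where "t m = of_nat (p ^ m)" for m
  define s where "s m = 1 - t m" for m
  have nvt: "nv (t m) = q ^ m" for m unfolding t_def q_def by (rule nv_ppow[OF V P])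
  have ts: "1 - s m = t m" for m by (simp add: s_def)
  have H: "nv_lim nv (\<lambda>N. euler_partial p nv \<chi> f N (s m)) (ell (s m)) \<and>
           nv_sums nv (\<lambda>n. c n * t m ^ n) (ell (s m))" if "m \<ge> m0" for m
  proof -
    have "nv (s m - 1) = q ^ m" by (simp add: s_def nvt nv_minus[OF V P])
    also have "\<dots> \<le> q ^ m0" using that q0 q1 by (intro power_decreasing) auto
    finally have "nv (s m - 1) < r" using m0r by simp
    then show ?thesis using hyp ts by metis
  qed
  define A where "A N = {a. 1 \<le> a \<and> a \<le> f * p ^ N \<and> \<not> p dvd a}" for N
  have finA: "finite (A N)" for N by (rule finite_subset[of _ "{..f * p ^ N}"]) (auto simp: A_def)
  define L where "L a = log_p nv (angle p nv a)" for a
  have Lb: "nv (L a) \<le> q" if "\<not> p dvd a" for a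
    unfolding L_def q_def by (rule log_bound[OF V P angle_close[OF V P that]])
  define \<beta> where "\<beta> a k = L a ^ k / of_nat (fact k)" for a k
  define b where "b N k = (\<Sum>a\<in>A N. (-1) ^ a * \<chi> a * \<beta> a k)" for N k
  define B where "B k = (if k = 0 then 1 else q)" for k :: nat
  have B1: "B k \<le> 1" "B k \<ge> 0" for k using q0 q1 by (auto simp: B_def)
  have bB: "nv (b N k) \<le> B k" for N k
    unfolding b_def
  proof (rule nv_sum_le[OF V P finA _ B1(2)])
    fix a assume "a \<in> A N"
    then have na: "\<not> p dvd a" by (simp add: A_def)
    have "nv (\<beta> a k) \<le> B k" unfolding \<beta>_def B_def q_def using coef_bound[OF V P Lb[OF na, unfolded q_def]] .
    then show "nv ((-1) ^ a * \<chi> a * \<beta> a k) \<le> B k"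
    proof -
      have "nv (\<chi> a) * nv (\<beta> a k) \<le> 1 * B k"
        using chi_bound[OF V P D, of a] \<open>nv (\<beta> a k) \<le> B k\<close> nv_nonneg[OF V P] B1
        by (intro mult_mono) auto
      then show ?thesis by (simp add: nv_mult[OF V P] nv_sign[OF V P])
    qed
  qed
  have Psums: "nv_sums nv (\<lambda>k. b N k * t m ^ k) (euler_partial p nv \<chi> f N (s m))" if "m \<ge> 1" for N m
  proof -
    have tl: "nv (t m) < 1" using nvt[of m] q0 q1 that by (simp add: power_less_one_iff)
    have each: "nv_sums nv (\<lambda>k. ((-1) ^ a * \<chi> a) * (\<beta> a k * t m ^ k))
                  (((-1) ^ a * \<chi> a) * ppow nv (angle p nv a) (1 - s m))" if "a \<in> A N" for a
    proof -
      have na: "\<not> p dvd a" using that by (simp add: A_def)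
      have "nv_sums nv (\<lambda>k. \<beta> a k * t m ^ k) (exp_p nv (t m * L a))"
        unfolding \<beta>_def by (rule exp_series[OF V P Lb[OF na, unfolded q_def] tl])
      then show ?thesis by (intro nv_sums_cmult[OF V P]) (simp add: ppow_def ts L_def)
    qed
    have "nv_sums nv (\<lambda>k. \<Sum>a\<in>A N. ((-1) ^ a * \<chi> a) * (\<beta> a k * t m ^ k))
            (\<Sum>a\<in>A N. ((-1) ^ a * \<chi> a) * ppow nv (angle p nv a) (1 - s m))"
      by (rule nv_sums_sum[OF V P finA each])
    moreover have "(\<lambda>k. \<Sum>a\<in>A N. ((-1) ^ a * \<chi> a) * (\<beta> a k * t m ^ k)) = (\<lambda>k. b N k * t m ^ k)"
      by (simp add: b_def sum_distrib_right mult.assoc)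
    moreover have "(\<Sum>a\<in>A N. ((-1) ^ a * \<chi> a) * ppow nv (angle p nv a) (1 - s m))
        = euler_partial p nv \<chi> f N (s m)"
      by (simp add: euler_partial_def A_def mult.assoc)
    ultimately show ?thesis by simp
  qed
  define R where "R = real p ^ m0"
  have R1: "R \<ge> 1" using prime_gt_0_nat[OF P] by (simp add: R_def one_le_power)
  obtain K0 where K0: "\<And>k. nv (c k * t m0 ^ k) \<le> K0"
    using nv_sums_terms_bounded[OF V P conjunct2[OF H[OF order_refl]]] by blast
  define K where "K = max K0 1"
  have K0': "K \<ge> 0" by (simp add: K_def)
  have cb: "nv (c k) \<le> K * R ^ k" for k
  proof -
    have "nv (c k) * q ^ (m0 * k) \<le> K0" using K0[of k] by (simp add: nv_mult[OF V P] nv_power[OF V P] nvt power_mult)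
    then have "nv (c k) * q ^ (m0 * k) * R ^ k \<le> K0 * R ^ k" using R1 by (intro mult_right_mono) auto
    moreover have "q ^ (m0 * k) * R ^ k = 1"
      using prime_gt_0_nat[OF P] by (simp add: q_def R_def power_mult power_one_over flip: power_mult_distrib)
    ultimately have "nv (c k) \<le> K0 * R ^ k" by (simp add: mult.assoc)
    also have "\<dots> \<le> K * R ^ k" using R1 by (intro mult_right_mono) (auto simp: K_def)
    finally show ?thesis .
  qed
  have eb: "nv (c k - b N k) \<le> K * R ^ k" for N k
  proof (rule nv_diff_le[OF V P cb])
    have "nv (b N k) \<le> 1" using bB[of N k] B1[of k] by simp
    also have "1 \<le> K * R ^ k"
    proof -
      have "1 * 1 \<le> K * R ^ k" using R1 by (intro mult_mono) (auto simp: K_def one_le_power)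
      then show ?thesis by simp
    qed
    finally show "nv (b N k) \<le> K * R ^ k" .
  qed
  have cl: "nv_lim nv (\<lambda>N. c n - b N n) 0" for n
  proof (rule coeff_limit[OF V P K0', of "\<lambda>N k. c k - b N k" m0 "\<lambda>N m. ell (s m) - euler_partial p nv \<chi> f N (s m)"])
    show "\<And>N k. nv (c k - b N k) \<le> K * (real p ^ m0) ^ k" using eb by (simp add: R_def)
    fix N m assume mm: "m0 < m"
    have "nv_sums nv (\<lambda>k. c k * t m ^ k - b N k * t m ^ k) (ell (s m) - euler_partial p nv \<chi> f N (s m))"
      using H[of m] Psums[of m N] mm by (intro nv_sums_diff[OF V P]) (auto simp: m0_def)
    then show "nv_sums nv (\<lambda>k. (c k - b N k) * of_nat (p ^ m) ^ k) (ell (s m) - euler_partial p nv \<chi> f N (s m))"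
      by (simp add: t_def left_diff_distrib)
  next
    fix m assume mm: "m0 < m"
    have "nv_lim nv (\<lambda>N. ell (s m) - euler_partial p nv \<chi> f N (s m)) (ell (s m) - ell (s m))"
      using H[of m] mm by (intro nv_lim_diff[OF V P] nv_lim_const[OF V P]) auto
    then show "nv_lim nv (\<lambda>N. ell (s m) - euler_partial p nv \<chi> f N (s m)) 0" by simp
  qed
  have cB: "nv (c n) \<le> B n" for n
  proof -
    have "nv_lim nv (\<lambda>N. c n - (c n - b N n)) (c n - 0)"
      by (intro nv_lim_diff[OF V P] nv_lim_const[OF V P] cl)
    then have "nv_lim nv (\<lambda>N. b N n) (c n)" by simp
    then have "nv (c n - 0) \<le> B n" by (rule nv_lim_bound[OF V P]) (use bB in simp)
    then show ?thesis by simp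
  qed
  have "\<forall>n\<ge>1. nv (c n) \<le> padic_abs p p"
  proof (intro allI impI)
    fix n :: nat assume "n \<ge> 1"
    then have "B n = q" by (simp add: B_def)
    then show "nv (c n) \<le> padic_abs p p" using cB[of n] padic_abs_self[OF P] by (simp add: q_def)
  qed
  moreover have "nv (c 0) \<le> 1" using cB[of 0] by (simp add: B_def)
  ultimately show ?thesis by simp
qed


end
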